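(* Let $\Gamma$ be a finite dynamic game with ordinal preferences and perfect recall, let $R\subseteq S$ be a restriction and $i\in I$. Then $$\mathbb U_i(R)=\bigcup_{u_i\in\mathcal U_i}\mathbb M_i(R)[u_i].$$
   Context: A finite dynamic game with ordinal preferences and perfect recall $\Gamma$ consists of: a finite set of players $I$; a finite rooted tree of histories (finite sequences of action profiles, simultaneous moves allowed) with terminal histories $Z$; for each $i$ a partition $H_i$ of the non-terminal histories where $i$ is active (at least two actions) into information sets with identical available actions; perfect recall; complete transitive preferences $\succsim_i$ on $Z$ (asymmetric part $\succ_i$). Strategies of $i$ are equivalence classes of behaviorally equivalent standard strategies (action assignments to $H_i$, identified when they allow the same information sets and prescribe the same actions there); $S_i$ is the finite set of strategies, $S=\prod_jS_j$, $S_{-i}=\prod_{j\ne i}S_j$, $\zeta:S\to Z$ the outcome map. For $h\in H_i$, $S_i(h)$, $S_{-i}(h)$ are strategies of $i$, resp. profiles of others, reaching $h$; $H_i(s_i)=\{h\in H_i:s_i\in S_i(h)\}$. A restriction is a nonempty $R=\prod_jR_j\subseteq S$; $R_i(h)=R_i\cap S_i(h)$, $R_{-i}(h)=R_{-i}\cap S_{-i}(h)$, $R^i(h)=R_i(h)\times R_{-i}(h)$. For $P=P_i\times P_{-i}$ ($P_{-i}\subseteq S_{-i}$ not necessarily a product), $s_i\in P_i$ is weakly dominated relative to $P$ by $t_i\in P_i$ if $\zeta(t_i,s_{-i})\succsim_i\zeta(s_i,s_{-i})$ for all $s_{-i}\in P_{-i}$ with $\succ_i$ for some; B-dominated w.r.t.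 $P$ if for every nonempty $Q_{-i}\subseteq P_{-i}$ it is weakly dominated relative to $P_i\times Q_{-i}$ by some strategy in $P_i$. $s_i\in R_i$ is conditionally B-dominated w.r.t. $R$ if some $h\in H_i(s_i)$ has $R^i(h)\ne\emptyset$ and $s_i$ B-dominated w.r.t. $R^i(h)$. $\mathbb U_i(R)$ is the set of $s_i\in R_i$ not conditionally B-dominated w.r.t. $R$. $\mathcal U_i$ is the set of $u_i:Z\to\mathbb R$ with $u_i(z)\ge u_i(z')\iff z\succsim_iz'$. Given $u_i$, $s_i\in P_i$ is strictly dominated relative to $P=P_i\times P_{-i}$ by a mixed strategy if there is a probability distribution $\sigma$ on $P_i$ with $\sum_{t_i\in P_i}\sigma(t_i)u_i(\zeta(t_i,s_{-i}))>u_i(\zeta(s_i,s_{-i}))$ for every $s_{-i}\in P_{-i}$. $\mathbb M_i(R)[u_i]$ is the set of $s_i\in R_i$ such that for every $h\in H_i(s_i)$ with $R^i(h)\ne\emptyset$, $s_i$ is not strictly dominated relative to $R^i(h)$ by a mixed strategy given $u_i$. *)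

theory Defs
  imports Complex_Main "HOL-Library.FuncSet"
begin

text \<open>A history is a finite list of action profiles
(functions assigning an action to every player); at each non-terminal history
every player has a nonempty set of feasible actions and the feasible action
profiles are exactly the product of these sets.\<close>

type_synonym ('i, 'a) hist = "('i \<Rightarrow> 'a) list"

record ('i, 'a) game =
  hists :: "('i, 'a) hist set"
  infos :: "'i \<Rightarrow> ('i, 'a) hist set set"
  pref  :: "'i \<Rightarrow> ('i, 'a) hist \<Rightarrow> ('i, 'a) hist \<Rightarrow> bool"

definition succs :: "('i, 'a, 'b) game_scheme \<Rightarrow> ('i, 'a) hist \<Rightarrow> ('i \<Rightarrow> 'a) set" where
  "succs G h = {a. h @ [a] \<in> hists G}"

definition terminals :: "('i, 'a, 'b) game_scheme \<Rightarrow> ('i, 'a) hist set" where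
  "terminals G = {h \<in> hists G. succs G h = {}}"

definition avail :: "('i, 'a, 'b) game_scheme \<Rightarrow> ('i, 'a) hist \<Rightarrow> 'i \<Rightarrow> 'a set" where
  "avail G h i = (\<lambda>a. a i) ` succs G h"

definition active :: "('i, 'a, 'b) game_scheme \<Rightarrow> 'i \<Rightarrow> ('i, 'a) hist \<Rightarrow> bool" where
  "active G i h \<longleftrightarrow> h \<in> hists G \<and> h \<notin> terminals G \<and> card (avail G h i) \<ge> 2"

definition info_of :: "('i, 'a, 'b) game_scheme \<Rightarrow> 'i \<Rightarrow> ('i, 'a) hist \<Rightarrow> ('i, 'a) hist set" where
  "info_of G i h = (THE I. I \<in> infos G i \<and> h \<in> I)"

definition experience :: "('i, 'a, 'b) game_scheme \<Rightarrow> 'i \<Rightarrow> ('i, 'a) hist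
    \<Rightarrow> (('i, 'a) hist set \<times> 'a) list" where
  "experience G i h = [(info_of G i (take k h), (h ! k) i). k \<leftarrow> [0..<length h], active G i (take k h)]"

definition tree_ok :: "('i, 'a, 'b) game_scheme \<Rightarrow> bool" where
  "tree_ok G \<longleftrightarrow> finite (hists G) \<and> [] \<in> hists G
     \<and> (\<forall>h h'. h @ h' \<in> hists G \<longrightarrow> h \<in> hists G)
     \<and> (\<forall>h \<in> hists G. succs G h \<noteq> {} \<longrightarrow> (\<forall>a. a \<in> succs G h \<longleftrightarrow> (\<forall>i. a i \<in> avail G h i)))"

definition infos_ok :: "('i, 'a, 'b) game_scheme \<Rightarrow> bool" where
  "infos_ok G \<longleftrightarrow> (\<forall>i.
       (\<forall>I \<in> infos G i. I \<noteq> {})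
     \<and> (\<forall>I \<in> infos G i. \<forall>J \<in> infos G i. I \<noteq> J \<longrightarrow> I \<inter> J = {})
     \<and> \<Union> (infos G i) = {h. active G i h}
     \<and> (\<forall>I \<in> infos G i. \<forall>h \<in> I. \<forall>h' \<in> I. avail G h i = avail G h' i))"

definition perfect_recall :: "('i, 'a, 'b) game_scheme \<Rightarrow> bool" where
  "perfect_recall G \<longleftrightarrow> (\<forall>i. \<forall>I \<in> infos G i. \<forall>h \<in> I. \<forall>h' \<in> I. experience G i h = experience G i h')"

definition prefs_ok :: "('i, 'a, 'b) game_scheme \<Rightarrow> bool" where
  "prefs_ok G \<longleftrightarrow> (\<forall>i.
       (\<forall>z \<in> terminals G. \<forall>z' \<in> terminals G. pref G i z z' \<or> pref G i z' z)
     \<and> (\<forall>z \<in> terminals G. \<forall>z' \<in> terminals G. \<forall>z'' \<in> terminals G.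
           pref G i z z' \<longrightarrow> pref G i z' z'' \<longrightarrow> pref G i z z''))"

definition finite_game :: "('i::finite, 'a, 'b) game_scheme \<Rightarrow> bool" where
  "finite_game G \<longleftrightarrow> tree_ok G \<and> infos_ok G \<and> perfect_recall G \<and> prefs_ok G"

definition spref :: "('i, 'a, 'b) game_scheme \<Rightarrow> 'i \<Rightarrow> ('i, 'a) hist \<Rightarrow> ('i, 'a) hist \<Rightarrow> bool" where
  "spref G i z z' \<longleftrightarrow> pref G i z z' \<and> \<not> pref G i z' z"

text \<open>A strategy (equivalence class of behaviourally equivalent standard strategies)
is represented by its canonical reduced form: a partial map defined exactly on the
information sets the strategy allows, giving the prescribed action there.\<close>
type_synonym ('i, 'a) strat = "('i, 'a) hist set \<Rightarrow> 'a option"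

definition consistent :: "('i, 'a, 'b) game_scheme \<Rightarrow> 'i \<Rightarrow> ('i, 'a) strat \<Rightarrow> ('i, 'a) hist \<Rightarrow> bool" where
  "consistent G i f h \<longleftrightarrow> (\<forall>k < length h. active G i (take k h) \<longrightarrow> f (info_of G i (take k h)) = Some ((h ! k) i))"

definition std_strats :: "('i, 'a, 'b) game_scheme \<Rightarrow> 'i \<Rightarrow> (('i, 'a) hist set \<Rightarrow> 'a) set" where
  "std_strats G i = {s. \<forall>I \<in> infos G i. \<forall>h \<in> I. s I \<in> avail G h i}"

definition allows :: "('i, 'a, 'b) game_scheme \<Rightarrow> 'i \<Rightarrow> (('i, 'a) hist set \<Rightarrow> 'a) \<Rightarrow> ('i, 'a) hist set \<Rightarrow> bool" where
  "allows G i s I \<longleftrightarrow> (\<exists>h \<in> I. consistent G i (Some \<circ> s) h)"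

definition reduce :: "('i, 'a, 'b) game_scheme \<Rightarrow> 'i \<Rightarrow> (('i, 'a) hist set \<Rightarrow> 'a) \<Rightarrow> ('i, 'a) strat" where
  "reduce G i s = (\<lambda>I. if I \<in> infos G i \<and> allows G i s I then Some (s I) else None)"

definition strats :: "('i, 'a, 'b) game_scheme \<Rightarrow> 'i \<Rightarrow> ('i, 'a) strat set" where
  "strats G i = reduce G i ` std_strats G i"

definition outcome :: "('i, 'a, 'b) game_scheme \<Rightarrow> ('i \<Rightarrow> ('i, 'a) strat) \<Rightarrow> ('i, 'a) hist" where
  "outcome G s = (THE z. z \<in> terminals G \<and> (\<forall>j. consistent G j (s j) z))"

text \<open>Profiles of the opponents of i are functions on UNIV - {i} (undefined at i);
(t_i, s_{-i}) is s_{-i}(i := t_i).\<close>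
definition others :: "'i \<Rightarrow> ('i \<Rightarrow> ('i, 'a) strat set) \<Rightarrow> ('i \<Rightarrow> ('i, 'a) strat) set" where
  "others i R = PiE (UNIV - {i}) R"

definition join :: "'i \<Rightarrow> ('i, 'a) strat \<Rightarrow> ('i \<Rightarrow> ('i, 'a) strat) \<Rightarrow> ('i \<Rightarrow> ('i, 'a) strat)" where
  "join i t so = so(i := t)"

definition restriction :: "('i, 'a, 'b) game_scheme \<Rightarrow> ('i \<Rightarrow> ('i, 'a) strat set) \<Rightarrow> bool" where
  "restriction G R \<longleftrightarrow> (\<forall>j. R j \<subseteq> strats G j \<and> R j \<noteq> {})"

text \<open>R_i(h) and R_{-i}(h) for an information set h of i (reaching h = reaching some history in h).\<close>
definition own_at :: "('i, 'a, 'b) game_scheme \<Rightarrow> ('i \<Rightarrow> ('i, 'a) strat set) \<Rightarrow> 'i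
    \<Rightarrow> ('i, 'a) hist set \<Rightarrow> ('i, 'a) strat set" where
  "own_at G R i I = {t \<in> R i. \<exists>h \<in> I. consistent G i t h}"

definition others_at :: "('i, 'a, 'b) game_scheme \<Rightarrow> ('i \<Rightarrow> ('i, 'a) strat set) \<Rightarrow> 'i
    \<Rightarrow> ('i, 'a) hist set \<Rightarrow> ('i \<Rightarrow> ('i, 'a) strat) set" where
  "others_at G R i I = {so \<in> others i R. \<exists>h \<in> I. \<forall>j. j \<noteq> i \<longrightarrow> consistent G j (so j) h}"

definition reaches_info :: "('i, 'a, 'b) game_scheme \<Rightarrow> 'i \<Rightarrow> ('i, 'a) strat \<Rightarrow> ('i, 'a) hist set \<Rightarrow> bool" where
  "reaches_info G i s I \<longleftrightarrow> I \<in> infos G i \<and> s \<in> strats G i \<and> (\<exists>h \<in> I. consistent G i s h)"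

definition weakly_dom :: "('i, 'a, 'b) game_scheme \<Rightarrow> 'i \<Rightarrow> ('i, 'a) strat set
    \<Rightarrow> ('i \<Rightarrow> ('i, 'a) strat) set \<Rightarrow> ('i, 'a) strat \<Rightarrow> ('i, 'a) strat \<Rightarrow> bool" where
  "weakly_dom G i Ps Po s t \<longleftrightarrow> s \<in> Ps \<and> t \<in> Ps
     \<and> (\<forall>so \<in> Po. pref G i (outcome G (join i t so)) (outcome G (join i s so)))
     \<and> (\<exists>so \<in> Po. spref G i (outcome G (join i t so)) (outcome G (join i s so)))"

definition B_dom :: "('i, 'a, 'b) game_scheme \<Rightarrow> 'i \<Rightarrow> ('i, 'a) strat set
    \<Rightarrow> ('i \<Rightarrow> ('i, 'a) strat) set \<Rightarrow> ('i, 'a) strat \<Rightarrow> bool" where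
  "B_dom G i Ps Po s \<longleftrightarrow> s \<in> Ps \<and> (\<forall>Q. Q \<subseteq> Po \<and> Q \<noteq> {} \<longrightarrow> (\<exists>t \<in> Ps. weakly_dom G i Ps Q s t))"

definition cond_B_dom :: "('i, 'a, 'b) game_scheme \<Rightarrow> ('i \<Rightarrow> ('i, 'a) strat set) \<Rightarrow> 'i
    \<Rightarrow> ('i, 'a) strat \<Rightarrow> bool" where
  "cond_B_dom G R i s \<longleftrightarrow> (\<exists>I. reaches_info G i s I \<and> own_at G R i I \<noteq> {} \<and> others_at G R i I \<noteq> {}
       \<and> B_dom G i (own_at G R i I) (others_at G R i I) s)"

definition UU :: "('i, 'a, 'b) game_scheme \<Rightarrow> ('i \<Rightarrow> ('i, 'a) strat set) \<Rightarrow> 'i \<Rightarrow> ('i, 'a) strat set" where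
  "UU G R i = {s \<in> R i. \<not> cond_B_dom G R i s}"

definition util_reps :: "('i, 'a, 'b) game_scheme \<Rightarrow> 'i \<Rightarrow> (('i, 'a) hist \<Rightarrow> real) set" where
  "util_reps G i = {u. \<forall>z \<in> terminals G. \<forall>z' \<in> terminals G. u z \<ge> u z' \<longleftrightarrow> pref G i z z'}"

definition strictly_dom_mixed :: "('i, 'a, 'b) game_scheme \<Rightarrow> 'i \<Rightarrow> (('i, 'a) hist \<Rightarrow> real)
    \<Rightarrow> ('i, 'a) strat set \<Rightarrow> ('i \<Rightarrow> ('i, 'a) strat) set \<Rightarrow> ('i, 'a) strat \<Rightarrow> bool" where
  "strictly_dom_mixed G i u Ps Po s \<longleftrightarrow> (\<exists>\<sigma> :: ('i, 'a) strat \<Rightarrow> real.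
       (\<forall>t \<in> Ps. \<sigma> t \<ge> 0) \<and> (\<Sum>t \<in> Ps. \<sigma> t) = 1
     \<and> (\<forall>so \<in> Po. (\<Sum>t \<in> Ps. \<sigma> t * u (outcome G (join i t so))) > u (outcome G (join i s so))))"

definition MM :: "('i, 'a, 'b) game_scheme \<Rightarrow> ('i \<Rightarrow> ('i, 'a) strat set) \<Rightarrow> 'i
    \<Rightarrow> (('i, 'a) hist \<Rightarrow> real) \<Rightarrow> ('i, 'a) strat set" where
  "MM G R i u = {s \<in> R i. \<forall>I. reaches_info G i s I \<and> own_at G R i I \<noteq> {} \<and> others_at G R i I \<noteq> {}
       \<longrightarrow> \<not> strictly_dom_mixed G i u (own_at G R i I) (others_at G R i I) s}"

end

theory Submission
  imports Defs
begin


lemma succs_finite: "finite (hists G) \<Longrightarrow> finite (succs G h)"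
proof -
  assume f: "finite (hists G)"
  have "succs G h = (\<lambda>a. h @ [a]) -` hists G" by (auto simp: succs_def)
  moreover have "inj (\<lambda>a. h @ [a])" by (auto simp: inj_def)
  ultimately show ?thesis using f by (simp add: finite_vimageI)
qed

lemma avail_finite: "finite (hists G) \<Longrightarrow> finite (avail G h j)"
  by (simp add: avail_def succs_finite)

lemma info_of_props:
  assumes "infos_ok G" "active G j h"
  shows "info_of G j h \<in> infos G j \<and> h \<in> info_of G j h"
proof -
  have U: "\<Union> (infos G j) = {h. active G j h}" and
    disj: "\<forall>I\<in>infos G j. \<forall>J\<in>infos G j. I \<noteq> J \<longrightarrow> I \<inter> J = {}"
    using assms(1) unfolding infos_ok_def by simp_all
  from U assms(2) have "h \<in> \<Union> (infos G j)" by simp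
  then obtain I where I: "I \<in> infos G j" "h \<in> I" by auto
  have uniq: "J = I" if "J \<in> infos G j \<and> h \<in> J" for J
  proof (rule ccontr)
    assume "J \<noteq> I"
    then have "J \<inter> I = {}" using disj that I(1) by blast
    then show False using that I(2) by blast
  qed
  have "info_of G j h = I" unfolding info_of_def
    apply (rule the_equality) using I uniq by blast+
  with I show ?thesis by simp
qed

lemma inactive_le1:
  assumes "tree_ok G" "h \<in> hists G" "succs G h \<noteq> {}" "\<not> active G j h"
  shows "\<forall>x\<in>avail G h j. \<forall>y\<in>avail G h j. x = y"
proof -
  have fin: "finite (avail G h j)" using assms(1) by (simp add: avail_finite tree_ok_def)
  have "h \<notin> terminals G" using assms(3) by (simp add: terminals_def)
  hence "card (avail G h j) \<le> Suc 0" using assms(2,4) by (simp add: active_def)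
  thus ?thesis using fin card_le_Suc0_iff_eq by blast
qed

lemma reduce_consistent:
  "consistent G j (reduce G j s) h \<Longrightarrow> consistent G j (Some \<circ> s) h"
  unfolding consistent_def reduce_def by (auto split: if_splits)

lemma outcome_exists:
  assumes fg: "finite_game G" and p: "\<forall>j. p j \<in> strats G j"
  shows "\<exists>z \<in> terminals G. \<forall>j. consistent G j (p j) z"
proof -
  have tr: "tree_ok G" and io: "infos_ok G" using fg by (auto simp: finite_game_def)
  have "\<forall>j. \<exists>s. s \<in> std_strats G j \<and> p j = reduce G j s"
    using p by (auto simp: strats_def)
  then obtain sj where sj: "\<And>j. sj j \<in> std_strats G j" "\<And>j. p j = reduce G j (sj j)"
    by metis
  have step: "\<exists>h' \<in> hists G. (\<forall>j. consistent G j (p j) h') \<and> length h' = Suc (length h)"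
    if h: "h \<in> hists G" "\<forall>j. consistent G j (p j) h" "h \<notin> terminals G" for h
  proof -
    have ne: "succs G h \<noteq> {}" using h by (simp add: terminals_def)
    define a where "a = (\<lambda>j. if active G j h then sj j (info_of G j h) else (THE x. x \<in> avail G h j))"
    have aj: "a j \<in> avail G h j" for j
    proof (cases "active G j h")
      case True
      then have "info_of G j h \<in> infos G j \<and> h \<in> info_of G j h" using info_of_props[OF io] by blast
      then show ?thesis using sj(1)[of j] True by (auto simp: a_def std_strats_def)
    next
      case False
      have ne2: "avail G h j \<noteq> {}" using ne by (simp add: avail_def)
      then obtain x where x: "x \<in> avail G h j" by blast
      have "\<forall>x\<in>avail G h j. \<forall>y\<in>avail G h j. x = y" using inactive_le1[OF tr h(1) ne False] .
      then have "(THE x. x \<in> avail G h j) = x" using x by (intro the_equality) auto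
      then show ?thesis using False x by (simp add: a_def)
    qed
    have "\<forall>a. a \<in> succs G h \<longleftrightarrow> (\<forall>i. a i \<in> avail G h i)"
      using tr h(1) ne unfolding tree_ok_def by blast
    then have asu: "a \<in> succs G h" using aj by blast
    hence hh: "h @ [a] \<in> hists G" by (simp add: succs_def)
    have "consistent G j (p j) (h @ [a])" for j
      unfolding consistent_def
    proof (intro allI impI)
      fix k assume k: "k < length (h @ [a])" and act: "active G j (take k (h @ [a]))"
      show "p j (info_of G j (take k (h @ [a]))) = Some (((h @ [a]) ! k) j)"
      proof (cases "k < length h")
        case True
        then have e1: "take k (h @ [a]) = take k h" "(h @ [a]) ! k = h ! k" by (auto simp: nth_append)
        have "p j (info_of G j (take k h)) = Some ((h ! k) j)"
          using h(2) act True e1(1) unfolding consistent_def by metis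
        then show ?thesis using e1 by simp
      next
        case False
        then have kk: "k = length h" using k by simp
        then have act': "active G j h" using act by simp
        then have I: "info_of G j h \<in> infos G j \<and> h \<in> info_of G j h" using info_of_props[OF io] by blast
        have "consistent G j (Some \<circ> sj j) h" 
        proof -
          have "consistent G j (p j) h" using h(2) by blast
          then have "consistent G j (reduce G j (sj j)) h" by (simp add: sj(2))
          then show ?thesis by (rule reduce_consistent)
        qed
        then have "allows G j (sj j) (info_of G j h)" using I by (auto simp: allows_def)
        then show ?thesis using kk I act' by (simp add: sj(2) reduce_def a_def)
      qed
    qed
    then show ?thesis using hh by (intro bexI[of _ "h @ [a]"]) auto
  qed
  have "\<forall>n. \<exists>h \<in> hists G. (\<forall>j. consistent G j (p j) h) \<and> (h \<in> terminals G \<or> n \<le> length h)"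
  proof
    fix n show "\<exists>h \<in> hists G. (\<forall>j. consistent G j (p j) h) \<and> (h \<in> terminals G \<or> n \<le> length h)"
    proof (induction n)
      case 0
      have "[] \<in> hists G" using tr by (simp add: tree_ok_def)
      then show ?case by (intro bexI[of _ "[]"]) (auto simp: consistent_def)
    next
      case (Suc n)
      then obtain h where h: "h \<in> hists G" "\<forall>j. consistent G j (p j) h" "h \<in> terminals G \<or> n \<le> length h" by blast
      show ?case
      proof (cases "h \<in> terminals G")
        case True then show ?thesis using h by blast
      next
        case False
        then obtain h' where "h' \<in> hists G" "\<forall>j. consistent G j (p j) h'" "length h' = Suc (length h)"
          using step h by blast
        then show ?thesis using h(3) False by auto
      qed
    qed
  qed
  then obtain h where h: "h \<in> hists G" "\<forall>j. consistent G j (p j) h"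
      "h \<in> terminals G \<or> Suc (Max (length ` hists G)) \<le> length h" by blast
  have fin: "finite (hists G)" using tr by (simp add: tree_ok_def)
  have "length h \<le> Max (length ` hists G)" using fin h(1) by simp
  then have "h \<in> terminals G" using h(3) by linarith
  then show ?thesis using h(2) by blast
qed

lemma outcome_unique:
  assumes fg: "finite_game G"
    and z1: "z1 \<in> terminals G" "\<forall>j. consistent G j (p j) z1"
    and z2: "z2 \<in> terminals G" "\<forall>j. consistent G j (p j) z2"
  shows "z1 = z2"
proof -
  have tr: "tree_ok G" using fg by (auto simp: finite_game_def)
  have pc: "\<And>h h'. h @ h' \<in> hists G \<Longrightarrow> h \<in> hists G" using tr unfolding tree_ok_def by blast
  have z1h: "z1 \<in> hists G" and z2h: "z2 \<in> hists G" using z1 z2 by (auto simp: terminals_def)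
  have tk: "take k z \<in> hists G" if "z \<in> hists G" for z k
    using pc[of "take k z" "drop k z"] that by simp
  have main: "k \<le> min (length z1) (length z2) \<Longrightarrow> take k z1 = take k z2" for k
  proof (induction k)
    case 0 then show ?case by simp
  next
    case (Suc k)
    then have k1: "k < length z1" and k2: "k < length z2" and IH: "take k z1 = take k z2" by auto
    define h where "h = take k z1"
    have hh: "h \<in> hists G" using tk z1h by (simp add: h_def)
    have s1: "z1 ! k \<in> succs G h"
      using tk[OF z1h, of "Suc k"] k1 by (simp add: succs_def h_def take_Suc_conv_app_nth)
    have s2: "z2 ! k \<in> succs G h"
      using tk[OF z2h, of "Suc k"] k2 IH by (simp add: succs_def h_def take_Suc_conv_app_nth)
    have "(z1 ! k) j = (z2 ! k) j" for j
    proof (cases "active G j h")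
      case True
      have "p j (info_of G j h) = Some ((z1 ! k) j)" using z1(2) k1 True
        unfolding consistent_def h_def by blast
      moreover have "p j (info_of G j h) = Some ((z2 ! k) j)" using z2(2) k2 True IH
        unfolding consistent_def h_def by metis
      ultimately show ?thesis by simp
    next
      case False
      have "\<forall>x\<in>avail G h j. \<forall>y\<in>avail G h j. x = y" using inactive_le1[OF tr hh _ False] s1 by blast
      moreover have "(z1 ! k) j \<in> avail G h j" "(z2 ! k) j \<in> avail G h j"
        using s1 s2 by (auto simp: avail_def)
      ultimately show ?thesis by blast
    qed
    then have "z1 ! k = z2 ! k" by auto
    then show ?case using IH k1 k2 by (simp add: take_Suc_conv_app_nth)
  qed
  have nolong: False if "length za < length zb" "za \<in> terminals G" "zb \<in> hists G"
     "take (length za) za = take (length za) zb" for za zb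
  proof -
    have "za @ [zb ! length za] = take (Suc (length za)) zb"
      using that by (simp add: take_Suc_conv_app_nth)
    then have "zb ! length za \<in> succs G za" using tk[OF that(3)] by (simp add: succs_def)
    then show False using that(2) by (simp add: terminals_def)
  qed
  have e: "take (min (length z1) (length z2)) z1 = take (min (length z1) (length z2)) z2"
    using main by simp
  show ?thesis
  proof (cases "length z1 = length z2")
    case True then show ?thesis using e by simp
  next
    case False
    then show ?thesis
    proof (cases "length z1 < length z2")
      case True then show ?thesis using nolong[of z1 z2] e z1 z2h by (simp add: min_def)
    next
      case False
      then have "length z2 < length z1" using \<open>length z1 \<noteq> length z2\<close> by simp
      then show ?thesis using nolong[of z2 z1] e z2 z1h by (simp add: min_def)
    qed
  qed
qed

lemma outcome_terminal:
  assumes "finite_game G" "\<forall>j. p j \<in> strats G j"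
  shows "outcome G p \<in> terminals G"
proof -
  obtain z where z: "z \<in> terminals G" "\<forall>j. consistent G j (p j) z" using outcome_exists assms by blast
  have "outcome G p = z" unfolding outcome_def
    using z outcome_unique[OF assms(1)] by (intro the_equality) blast+
  then show ?thesis using z by simp
qed

lemma strats_finite:
  assumes "finite_game G" shows "finite (strats G j)"
proof -
  have tr: "tree_ok G" and io: "infos_ok G" using assms by (auto simp: finite_game_def)
  have fh: "finite (hists G)" using tr by (simp add: tree_ok_def)
  have "\<Union> (infos G j) \<subseteq> hists G" using io by (auto simp: infos_ok_def active_def)
  then have "infos G j \<subseteq> Pow (hists G)" by auto
  then have fi: "finite (infos G j)" using fh finite_subset by blast
  define A where "A = (\<Union>h\<in>hists G. avail G h j)"
  have fA: "finite A" unfolding A_def using fh avail_finite[OF fh] by (intro finite_UN_I) auto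
  have "strats G j \<subseteq> {f. \<forall>x. (x \<in> infos G j \<longrightarrow> f x \<in> insert None (Some ` A)) \<and> (x \<notin> infos G j \<longrightarrow> f x = None)}"
  proof
    fix f assume "f \<in> strats G j"
    then obtain s where s: "s \<in> std_strats G j" "f = reduce G j s" by (auto simp: strats_def)
    have "s I \<in> A" if "I \<in> infos G j" for I
    proof -
      have "I \<noteq> {}" using io that by (auto simp: infos_ok_def)
      then obtain h where "h \<in> I" by blast
      moreover have "h \<in> hists G" using \<open>h\<in>I\<close> that \<open>\<Union> (infos G j) \<subseteq> hists G\<close> by blast
      ultimately show ?thesis using s(1) that by (auto simp: std_strats_def A_def)
    qed
    then show "f \<in> {f. \<forall>x. (x \<in> infos G j \<longrightarrow> f x \<in> insert None (Some ` A)) \<and> (x \<notin> infos G j \<longrightarrow> f x = None)}"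
      using s(2) by (auto simp: reduce_def)
  qed
  moreover have "finite {f. \<forall>x. (x \<in> infos G j \<longrightarrow> f x \<in> insert None (Some ` A)) \<and> (x \<notin> infos G j \<longrightarrow> f x = None)}"
    using fi fA by (intro finite_set_of_finite_funs) auto
  ultimately show ?thesis using finite_subset by blast
qed



lemma mixed_from_B:
  fixes f :: "'s \<Rightarrow> 'q \<Rightarrow> real"
  assumes fPs: "finite Ps" and sPs: "s \<in> Ps" and fPo: "finite Po"
    and H: "\<forall>Q. Q \<subseteq> Po \<and> Q \<noteq> {} \<longrightarrow> (\<exists>t\<in>Ps. (\<forall>q\<in>Q. f t q \<ge> f s q) \<and> (\<exists>q\<in>Q. f t q > f s q))"
  shows "\<exists>\<sigma>. (\<forall>t\<in>Ps. \<sigma> t \<ge> 0) \<and> sum \<sigma> Ps = 1 \<and> (\<forall>q\<in>Po. (\<Sum>t\<in>Ps. \<sigma> t * f t q) > f s q)"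
  using fPo H
proof (induction Po rule: finite_psubset_induct)
  case (psubset Po)
  show ?case
  proof (cases "Po = {}")
    case True
    show ?thesis
      by (rule exI[of _ "\<lambda>t. if t = s then 1 else 0"]) (simp add: fPs sPs True)
  next
    case False
    then obtain t0 where t0: "t0 \<in> Ps" "\<forall>q\<in>Po. f t0 q \<ge> f s q" "\<exists>q\<in>Po. f t0 q > f s q"
      using psubset.prems by blast
    define A where "A = {q\<in>Po. f t0 q > f s q}"
    define Qr where "Qr = Po - A"
    have AP: "A \<subseteq> Po" "A \<noteq> {}" using t0 by (auto simp: A_def)
    have QP: "Qr \<subset> Po" using AP by (auto simp: Qr_def)
    have HQ: "\<forall>Q. Q \<subseteq> Qr \<and> Q \<noteq> {} \<longrightarrow> (\<exists>t\<in>Ps. (\<forall>q\<in>Q. f t q \<ge> f s q) \<and> (\<exists>q\<in>Q. f t q > f s q))"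
    proof (intro allI impI)
      fix Q assume "Q \<subseteq> Qr \<and> Q \<noteq> {}"
      then have "Q \<subseteq> Po \<and> Q \<noteq> {}" by (auto simp: Qr_def)
      then show "\<exists>t\<in>Ps. (\<forall>q\<in>Q. f t q \<ge> f s q) \<and> (\<exists>q\<in>Q. f t q > f s q)"
        using psubset.prems by blast
    qed
    obtain \<sigma>' where s': "\<forall>t\<in>Ps. \<sigma>' t \<ge> 0" "sum \<sigma>' Ps = 1"
        "\<forall>q\<in>Qr. (\<Sum>t\<in>Ps. \<sigma>' t * f t q) > f s q"
      using psubset.IH[OF QP HQ] by blast
    define V where "V q = (\<Sum>t\<in>Ps. \<sigma>' t * f t q)" for q
    have ev1: "\<forall>q\<in>A. eventually (\<lambda>e. (1 - e) * f t0 q + e * V q > f s q) (at_right (0::real))"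
    proof
      fix q assume q: "q \<in> A"
      have "((\<lambda>e. (1 - e) * f t0 q + e * V q) \<longlongrightarrow> (1 - 0) * f t0 q + 0 * V q) (at_right (0::real))"
        by (intro tendsto_intros)
      then have "((\<lambda>e. (1 - e) * f t0 q + e * V q) \<longlongrightarrow> f t0 q) (at_right (0::real))" by simp
      moreover have "f s q < f t0 q" using q by (simp add: A_def)
      ultimately show "eventually (\<lambda>e. (1 - e) * f t0 q + e * V q > f s q) (at_right (0::real))"
        using order_tendstoD(1) by blast
    qed
    have fA: "finite A" using AP psubset.hyps finite_subset by blast
    have "eventually (\<lambda>e. \<forall>q\<in>A. (1 - e) * f t0 q + e * V q > f s q) (at_right (0::real))"
      using eventually_ball_finite[OF fA ev1] .
    moreover have "eventually (\<lambda>e. e \<in> {0<..<1}) (at_right (0::real))"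
      by (rule eventually_at_right_real) simp
    ultimately have "eventually (\<lambda>e. e \<in> {0<..<1} \<and> (\<forall>q\<in>A. (1 - e) * f t0 q + e * V q > f s q)) (at_right (0::real))"
      by (simp add: eventually_conj_iff)
    then obtain e where e: "0 < e" "e < 1" "\<forall>q\<in>A. (1 - e) * f t0 q + e * V q > f s q"
      using eventually_happens[of _ "at_right (0::real)"] by auto
    define \<sigma> where "\<sigma> t = (1 - e) * (if t = t0 then 1 else 0) + e * \<sigma>' t" for t
    have sum1: "sum \<sigma> Ps = 1"
      using t0(1) s'(2) fPs by (simp add: \<sigma>_def sum.distrib sum_distrib_left[symmetric])
    have val: "(\<Sum>t\<in>Ps. \<sigma> t * f t q) = (1 - e) * f t0 q + e * V q" for q
    proof -
      have "(\<Sum>t\<in>Ps. \<sigma> t * f t q) = (\<Sum>t\<in>Ps. (1 - e) * (if t = t0 then f t q else 0) + e * (\<sigma>' t * f t q))"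
        by (rule sum.cong) (auto simp: \<sigma>_def algebra_simps)
      also have "\<dots> = (1 - e) * (\<Sum>t\<in>Ps. (if t = t0 then f t q else 0)) + e * V q"
        by (simp add: sum.distrib sum_distrib_left V_def)
      also have "\<dots> = (1 - e) * f t0 q + e * V q" using fPs t0(1) by simp
      finally show ?thesis .
    qed
    show ?thesis
    proof (intro exI[of _ \<sigma>] conjI ballI)
      fix t assume "t \<in> Ps" then show "\<sigma> t \<ge> 0" using s'(1) e by (simp add: \<sigma>_def)
    next
      show "sum \<sigma> Ps = 1" by (rule sum1)
    next
      fix q assume q: "q \<in> Po"
      show "(\<Sum>t\<in>Ps. \<sigma> t * f t q) > f s q"
      proof (cases "q \<in> A")
        case True then show ?thesis using e(3) val by simp
      next
        case False
        then have "q \<in> Qr" using q by (simp add: Qr_def)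
        then have "V q > f s q" using s'(3) by (simp add: V_def)
        moreover have "f t0 q = f s q" using False q t0(2) by (force simp: A_def)
        ultimately have "(1 - e) * f t0 q + e * V q > (1 - e) * f s q + e * f s q"
          using e by (simp add: mult_strict_left_mono)
        then show ?thesis using val[of q] by (simp add: algebra_simps)
      qed
    qed
  qed
qed

lemma not_mixed:
  fixes r :: "'s \<Rightarrow> 'q \<Rightarrow> nat" and M :: real
  assumes fQ: "finite Q" and Qne: "Q \<noteq> {}" and fPs: "finite Ps"
    and M: "M > 1" "real (card Q) \<le> M"
    and hyp: "\<forall>t\<in>Ps. (\<exists>q\<in>Q. r t q < r s q) \<or> (\<forall>q\<in>Q. r t q \<le> r s q)"
    and sg: "\<forall>t\<in>Ps. \<sigma> t \<ge> 0" "sum \<sigma> Ps = 1"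
  shows "\<not> (\<forall>q\<in>Q. (\<Sum>t\<in>Ps. \<sigma> t * (- ((1/M) ^ r t q))) > - ((1/M) ^ r s q))"
proof
  define f where "f t q = - ((1/M) ^ r t q)" for t q
  define w where "w q = M ^ r s q" for q
  assume A: "\<forall>q\<in>Q. (\<Sum>t\<in>Ps. \<sigma> t * (- ((1/M) ^ r t q))) > - ((1/M) ^ r s q)"
  have tm: "w q * (f t q - f s q) = 1 - M ^ r s q / M ^ r t q" for t q
    using M by (simp add: w_def f_def power_one_over algebra_simps)
  have t1: "w q * (f t q - f s q) \<le> 1" for t q
    using M by (simp add: tm)
  have t0: "w q * (f t q - f s q) \<le> 0" if "r t q \<le> r s q" for t q
  proof -
    have "M ^ r t q \<le> M ^ r s q" using that M by (simp add: power_increasing)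
    then have "1 \<le> M ^ r s q / M ^ r t q" using M by simp
    then show ?thesis by (simp add: tm)
  qed
  have tM: "w q * (f t q - f s q) \<le> 1 - M" if "r t q < r s q" for t q
  proof -
    have "M ^ Suc (r t q) \<le> M ^ r s q" using that M by (intro power_increasing) auto
    then have "M * M ^ r t q \<le> M ^ r s q" by simp
    then have "M \<le> M ^ r s q / M ^ r t q" using M by (simp add: field_simps)
    then show ?thesis by (simp add: tm)
  qed
  define D where "D t = (\<Sum>q\<in>Q. w q * (f t q - f s q))" for t
  have Dle: "D t \<le> 0" if "t \<in> Ps" for t
  proof (cases "\<exists>q\<in>Q. r t q < r s q")
    case True
    then obtain q0 where q0: "q0 \<in> Q" "r t q0 < r s q0" by blast
    have "D t = w q0 * (f t q0 - f s q0) + (\<Sum>q\<in>Q - {q0}. w q * (f t q - f s q))"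
      unfolding D_def using fQ q0(1) by (simp add: sum.remove)
    also have "\<dots> \<le> (1 - M) + (\<Sum>q\<in>Q - {q0}. 1)"
      using tM[OF q0(2)] t1 by (intro add_mono sum_mono) auto
    also have "\<dots> = 1 - M + (real (card Q) - 1)"
    proof -
      have "card Q \<ge> 1" using fQ q0(1) card_0_eq by fastforce
      then show ?thesis using fQ q0(1) by (simp add: card_Diff_singleton of_nat_diff)
    qed
    also have "\<dots> \<le> 0" using M by simp
    finally show ?thesis .
  next
    case False
    then have "\<forall>q\<in>Q. r t q \<le> r s q" using hyp that by blast
    then show ?thesis unfolding D_def using t0 by (intro sum_nonpos) auto
  qed
  have "0 < (\<Sum>q\<in>Q. w q * ((\<Sum>t\<in>Ps. \<sigma> t * f t q) - f s q))"
  proof (rule sum_pos[OF fQ Qne])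
    fix q assume "q \<in> Q"
    then have "(\<Sum>t\<in>Ps. \<sigma> t * f t q) > f s q" using A unfolding f_def by blast
    then have "(\<Sum>t\<in>Ps. \<sigma> t * f t q) - f s q > 0" by simp
    moreover have "w q > 0" using M by (simp add: w_def)
    ultimately show "0 < w q * ((\<Sum>t\<in>Ps. \<sigma> t * f t q) - f s q)" by simp
  qed
  also have "(\<Sum>q\<in>Q. w q * ((\<Sum>t\<in>Ps. \<sigma> t * f t q) - f s q)) = (\<Sum>t\<in>Ps. \<sigma> t * D t)"
  proof -
    have "(\<Sum>q\<in>Q. w q * ((\<Sum>t\<in>Ps. \<sigma> t * f t q) - f s q))
        = (\<Sum>q\<in>Q. (\<Sum>t\<in>Ps. \<sigma> t * (w q * (f t q - f s q))))"
    proof (rule sum.cong[OF refl])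
      fix q
      have "(\<Sum>t\<in>Ps. \<sigma> t * (w q * (f t q - f s q))) = w q * ((\<Sum>t\<in>Ps. \<sigma> t * f t q) - (\<Sum>t\<in>Ps. \<sigma> t) * f s q)"
        by (simp add: sum_distrib_left sum_distrib_right sum_subtractf algebra_simps)
      then show "w q * ((\<Sum>t\<in>Ps. \<sigma> t * f t q) - f s q) = (\<Sum>t\<in>Ps. \<sigma> t * (w q * (f t q - f s q)))"
        using sg(2) by simp
    qed
    also have "\<dots> = (\<Sum>t\<in>Ps. \<sigma> t * D t)"
      by (simp add: D_def sum_distrib_left sum.swap[of _ Q])
    finally show ?thesis .
  qed
  also have "\<dots> \<le> 0"
    using Dle sg(1) by (intro sum_nonpos) (simp add: mult_nonneg_nonpos)
  finally show False by simp
qed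



definition rk :: "('i, 'a, 'b) game_scheme \<Rightarrow> 'i \<Rightarrow> ('i, 'a) hist \<Rightarrow> nat" where
  "rk G i z = card {z' \<in> terminals G. pref G i z z'}"

lemma rk_iff:
  assumes po: "prefs_ok G" and ft: "finite (terminals G)"
    and z: "z \<in> terminals G" "z' \<in> terminals G"
  shows "rk G i z' \<le> rk G i z \<longleftrightarrow> pref G i z z'"
proof -
  have comp: "\<forall>a\<in>terminals G. \<forall>b\<in>terminals G. pref G i a b \<or> pref G i b a"
   and trans: "\<forall>a\<in>terminals G. \<forall>b\<in>terminals G. \<forall>c\<in>terminals G. pref G i a b \<longrightarrow> pref G i b c \<longrightarrow> pref G i a c"
    using po[unfolded prefs_ok_def, THEN spec[of _ i]] by (rule conjunct1, rule conjunct2)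
  have sub: "{y \<in> terminals G. pref G i b y} \<subseteq> {y \<in> terminals G. pref G i a y}"
    if "a \<in> terminals G" "b \<in> terminals G" "pref G i a b" for a b
  proof
    fix y assume y: "y \<in> {y \<in> terminals G. pref G i b y}"
    then have "y \<in> terminals G" "pref G i b y" by auto
    then have "pref G i a y" using trans that by blast
    then show "y \<in> {y \<in> terminals G. pref G i a y}" using \<open>y \<in> terminals G\<close> by simp
  qed
  show ?thesis
  proof
    assume le: "rk G i z' \<le> rk G i z"
    show "pref G i z z'"
    proof (rule ccontr)
      assume np: "\<not> pref G i z z'"
      then have p: "pref G i z' z" using comp z by blast
      have "{y \<in> terminals G. pref G i z y} \<subset> {y \<in> terminals G. pref G i z' y}"
      proof
        show "{y \<in> terminals G. pref G i z y} \<subseteq> {y \<in> terminals G. pref G i z' y}"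
          using sub[OF z(2) z(1) p] .
        have "pref G i z' z'" using comp z(2) by blast
        then have "z' \<in> {y \<in> terminals G. pref G i z' y}" using z(2) by simp
        moreover have "z' \<notin> {y \<in> terminals G. pref G i z y}" using np by simp
        ultimately show "{y \<in> terminals G. pref G i z y} \<noteq> {y \<in> terminals G. pref G i z' y}" by blast
      qed
      then have "rk G i z < rk G i z'" unfolding rk_def
        using ft by (intro psubset_card_mono) auto
      then show False using le by simp
    qed
  next
    assume "pref G i z z'"
    then show "rk G i z' \<le> rk G i z" unfolding rk_def
      using ft sub[OF z] by (intro card_mono) auto
  qed
qed

lemma join_strats:
  assumes "restriction G R" "t \<in> R i" "so \<in> others i R"
  shows "\<forall>j. join i t so j \<in> strats G j"
proof
  fix j
  show "join i t so j \<in> strats G j"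
  proof (cases "j = i")
    case True then show ?thesis using assms by (auto simp: join_def restriction_def)
  next
    case False
    then have "so j \<in> R j" using assms(3) by (auto simp: others_def PiE_iff)
    then show ?thesis using assms(1) False by (auto simp: join_def restriction_def)
  qed
qed

theorem lemma5:
  fixes G :: "('i::finite, 'a) game" and R :: "'i \<Rightarrow> ('i, 'a) strat set" and i :: 'i
  assumes "finite_game G" and "restriction G R"
  shows "UU G R i = (\<Union>u \<in> util_reps G i. MM G R i u)"
proof -
  note fg = assms(1) and rs = assms(2)
  have tr: "tree_ok G" and po: "prefs_ok G" using fg unfolding finite_game_def by blast+
  have "finite (hists G)" using tr unfolding tree_ok_def by blast
  moreover have "terminals G \<subseteq> hists G" by (auto simp: terminals_def)
  ultimately have ft: "finite (terminals G)" using finite_subset by blast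
  define out where "out t so = outcome G (join i t so)" for t so
  have oterm: "out t so \<in> terminals G" if "t \<in> R i" "so \<in> others i R" for t so
    unfolding out_def using outcome_terminal[OF fg join_strats[OF rs that]] .
  have fR: "finite (R j)" for j
    using strats_finite[OF fg, of j] rs unfolding restriction_def by (meson finite_subset)
  have fO: "finite (others i R)" unfolding others_def using fR by (intro finite_PiE) auto
  have ownsub: "own_at G R i I \<subseteq> R i" for I by (auto simp: own_at_def)
  have othsub: "others_at G R i I \<subseteq> others i R" for I by (auto simp: others_at_def)
  have fown: "finite (own_at G R i I)" for I using fR ownsub finite_subset by blast
  have foth: "finite (others_at G R i I)" for I using fO othsub finite_subset by blast
  show ?thesis
  proof
    show "UU G R i \<subseteq> (\<Union>u \<in> util_reps G i. MM G R i u)"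
    proof
      fix s assume sU: "s \<in> UU G R i"
      then have sR: "s \<in> R i" and ncb: "\<not> cond_B_dom G R i s" by (auto simp: UU_def)
      define M :: real where "M = real (card (others i R)) + 2"
      define u where "u z = - ((1/M) ^ rk G i z)" for z
      have M1: "M > 1" by (simp add: M_def)
      have uU: "u \<in> util_reps G i"
        unfolding util_reps_def
      proof (intro CollectI ballI)
        fix z z' assume z: "z \<in> terminals G" "z' \<in> terminals G"
        have "u z' \<le> u z \<longleftrightarrow> (1/M) ^ rk G i z \<le> (1/M) ^ rk G i z'" by (simp add: u_def)
        also have "\<dots> \<longleftrightarrow> rk G i z' \<le> rk G i z" using M1 by (intro power_decreasing_iff) auto
        also have "\<dots> \<longleftrightarrow> pref G i z z'" using rk_iff[OF po ft z] .
        finally show "u z' \<le> u z \<longleftrightarrow> pref G i z z'" .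
      qed
      have "s \<in> MM G R i u"
        unfolding MM_def
      proof (intro CollectI conjI allI impI sR)
        fix I assume I: "reaches_info G i s I \<and> own_at G R i I \<noteq> {} \<and> others_at G R i I \<noteq> {}"
        let ?Ps = "own_at G R i I" and ?Po = "others_at G R i I"
        have sPs: "s \<in> ?Ps" using I sR by (auto simp: own_at_def reaches_info_def)
        have "\<not> B_dom G i ?Ps ?Po s" using ncb I unfolding cond_B_dom_def by blast
        then obtain Q where Q: "Q \<subseteq> ?Po" "Q \<noteq> {}" "\<forall>t\<in>?Ps. \<not> weakly_dom G i ?Ps Q s t"
          using sPs unfolding B_dom_def by blast
        have QO: "Q \<subseteq> others i R" using Q(1) othsub by blast
        have fQ: "finite Q" using QO fO finite_subset by blast
        have cQ: "real (card Q) \<le> M" using card_mono[OF fO QO] by (simp add: M_def)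
        define r where "r t q = rk G i (out t q)" for t q
        have hyp: "\<forall>t\<in>?Ps. (\<exists>q\<in>Q. r t q < r s q) \<or> (\<forall>q\<in>Q. r t q \<le> r s q)"
        proof
          fix t assume t: "t \<in> ?Ps"
          have tR: "t \<in> R i" using t ownsub by blast
          have nw: "\<not> ((\<forall>q\<in>Q. pref G i (out t q) (out s q)) \<and> (\<exists>q\<in>Q. spref G i (out t q) (out s q)))"
            using Q(3) t sPs unfolding weakly_dom_def out_def by blast
          have TT: "out t q \<in> terminals G" "out s q \<in> terminals G" if "q \<in> Q" for q
            using oterm tR sR QO that by blast+
          show "(\<exists>q\<in>Q. r t q < r s q) \<or> (\<forall>q\<in>Q. r t q \<le> r s q)"
          proof (cases "\<forall>q\<in>Q. pref G i (out t q) (out s q)")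
            case False
            then obtain q where q: "q \<in> Q" "\<not> pref G i (out t q) (out s q)" by blast
            then have "r t q < r s q" using rk_iff[OF po ft TT(1)[OF q(1)] TT(2)[OF q(1)], of i]
              by (simp add: r_def)
            then show ?thesis using q by blast
          next
            case True
            then have "\<forall>q\<in>Q. \<not> spref G i (out t q) (out s q)" using nw by blast
            then have "\<forall>q\<in>Q. pref G i (out s q) (out t q)" using True by (auto simp: spref_def)
            then have "\<forall>q\<in>Q. r t q \<le> r s q" using rk_iff[OF po ft, of _ _ i] TT by (simp add: r_def)
            then show ?thesis by blast
          qed
        qed
        show "\<not> strictly_dom_mixed G i u ?Ps ?Po s"
        proof
          assume "strictly_dom_mixed G i u ?Ps ?Po s"
          then obtain \<sigma> where sg: "\<forall>t\<in>?Ps. \<sigma> t \<ge> 0" "sum \<sigma> ?Ps = 1"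
            "\<forall>so\<in>?Po. (\<Sum>t\<in>?Ps. \<sigma> t * u (outcome G (join i t so))) > u (outcome G (join i s so))"
            unfolding strictly_dom_mixed_def by blast
          have "\<forall>q\<in>Q. (\<Sum>t\<in>?Ps. \<sigma> t * (- ((1/M) ^ r t q))) > - ((1/M) ^ r s q)"
            using sg(3) Q(1) by (auto simp: r_def u_def out_def)
          then show False using not_mixed[OF fQ Q(2) fown M1 cQ hyp sg(1,2)] by blast
        qed
      qed
      then show "s \<in> (\<Union>u \<in> util_reps G i. MM G R i u)" using uU by blast
    qed
  next
    show "(\<Union>u \<in> util_reps G i. MM G R i u) \<subseteq> UU G R i"
    proof
      fix s assume "s \<in> (\<Union>u \<in> util_reps G i. MM G R i u)"
      then obtain u where uU: "u \<in> util_reps G i" and sM: "s \<in> MM G R i u" by blast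
      have sR: "s \<in> R i" using sM by (simp add: MM_def)
      have "\<not> cond_B_dom G R i s"
      proof
        assume "cond_B_dom G R i s"
        then obtain I where I: "reaches_info G i s I" "own_at G R i I \<noteq> {}" "others_at G R i I \<noteq> {}"
          and B: "B_dom G i (own_at G R i I) (others_at G R i I) s"
          unfolding cond_B_dom_def by blast
        let ?Ps = "own_at G R i I" and ?Po = "others_at G R i I"
        have sPs: "s \<in> ?Ps" using B by (simp add: B_dom_def)
        define f where "f t q = u (out t q)" for t q
        have H: "\<forall>Q. Q \<subseteq> ?Po \<and> Q \<noteq> {} \<longrightarrow> (\<exists>t\<in>?Ps. (\<forall>q\<in>Q. f t q \<ge> f s q) \<and> (\<exists>q\<in>Q. f t q > f s q))"
        proof (intro allI impI)
          fix Q assume Q: "Q \<subseteq> ?Po \<and> Q \<noteq> {}"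
          then obtain t where t: "t \<in> ?Ps" "weakly_dom G i ?Ps Q s t" using B unfolding B_dom_def by blast
          have tR: "t \<in> R i" using t ownsub by blast
          have TT: "out t q \<in> terminals G" "out s q \<in> terminals G" if "q \<in> Q" for q
            using oterm tR sR Q othsub that by blast+
          have w1: "\<forall>q\<in>Q. pref G i (out t q) (out s q)" and w2: "\<exists>q\<in>Q. spref G i (out t q) (out s q)"
            using t(2) unfolding weakly_dom_def out_def by blast+
          have "\<forall>q\<in>Q. f t q \<ge> f s q" using w1 uU TT unfolding util_reps_def f_def by blast
          moreover have "\<exists>q\<in>Q. f t q > f s q"
          proof -
            obtain q where q: "q \<in> Q" "spref G i (out t q) (out s q)" using w2 by blast
            then have "\<not> pref G i (out s q) (out t q)" by (simp add: spref_def)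
            then have "\<not> f s q \<ge> f t q" using uU TT[OF q(1)] unfolding util_reps_def f_def by blast
            then show ?thesis using q by force
          qed
          ultimately show "\<exists>t\<in>?Ps. (\<forall>q\<in>Q. f t q \<ge> f s q) \<and> (\<exists>q\<in>Q. f t q > f s q)" using t(1) by blast
        qed
        obtain \<sigma> where "(\<forall>t\<in>?Ps. \<sigma> t \<ge> 0) \<and> sum \<sigma> ?Ps = 1 \<and> (\<forall>q\<in>?Po. (\<Sum>t\<in>?Ps. \<sigma> t * f t q) > f s q)"
          using mixed_from_B[OF fown sPs foth H] by blast
        then have "strictly_dom_mixed G i u ?Ps ?Po s"
          unfolding strictly_dom_mixed_def f_def out_def by blast
        moreover have "reaches_info G i s I \<and> ?Ps \<noteq> {} \<and> ?Po \<noteq> {}" using I by blast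
        ultimately show False using sM unfolding MM_def by blast
      qed
      then show "s \<in> UU G R i" using sR by (simp add: UU_def)
    qed
  qed
qed


end
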